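(* Let $k,d>0$, $b,\tilde b\ge0$ be constants and $\eta_1,\eta_2,c_1,c_2,\tilde c_1,\tilde c_2\ge0$, with $c_1^{tot}:=\eta_1+c_1>0$, $c_2^{tot}:=\eta_2+c_2$, $\tilde c_2>0$, and $b/k+\tilde b/d<1$. Consider $$\frac{dN_1}{dt}=-\big(k+c_1^{tot}N_1+c_2^{tot}N_2\big)N_1+bN_1+\tilde bN_2,\qquad \frac{dN_2}{dt}=-\big(d+\tilde c_1N_1+\tilde c_2N_2\big)N_2+\big(k+\eta_1N_1+\eta_2N_2\big)N_1,$$ with nonnegative initial data. Then, for $\tilde b$ small enough (relative to the other parameters), $(0,0)$ is the unique steady state in $\mathbb{R}_+^2$ and it is stable; moreover every trajectory converges to $(0,0)$. *)

theory Defs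
  imports "HOL-Analysis.Analysis"
begin

definition F1 :: "real \<Rightarrow> real \<Rightarrow> real \<Rightarrow> real \<Rightarrow> real \<Rightarrow> real \<Rightarrow> real \<Rightarrow> real \<Rightarrow> real \<Rightarrow> real" where
  "F1 k b bt eta1 eta2 c1 c2 x y =
     - (k + (eta1 + c1) * x + (eta2 + c2) * y) * x + b * x + bt * y"

definition F2 :: "real \<Rightarrow> real \<Rightarrow> real \<Rightarrow> real \<Rightarrow> real \<Rightarrow> real \<Rightarrow> real \<Rightarrow> real \<Rightarrow> real" where
  "F2 k d eta1 eta2 ct1 ct2 x y =
     - (d + ct1 * x + ct2 * y) * y + (k + eta1 * x + eta2 * y) * x"

definition is_sol ::
  "real \<Rightarrow> real \<Rightarrow> real \<Rightarrow> real \<Rightarrow> real \<Rightarrow> real \<Rightarrow> real \<Rightarrow> real \<Rightarrow> real \<Rightarrow> real \<Rightarrow>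
   (real \<Rightarrow> real) \<Rightarrow> (real \<Rightarrow> real) \<Rightarrow> bool" where
  "is_sol k d b bt eta1 eta2 c1 c2 ct1 ct2 N1 N2 \<longleftrightarrow>
     (\<forall>t\<ge>0. (N1 has_real_derivative F1 k b bt eta1 eta2 c1 c2 (N1 t) (N2 t)) (at t within {0..})
          \<and> (N2 has_real_derivative F2 k d eta1 eta2 ct1 ct2 (N1 t) (N2 t)) (at t within {0..}))"

end

theory Submission
  imports Defs "HOL-Real_Asymp.Real_Asymp"
begin

lemma cont0:
  fixes f f' :: "real \<Rightarrow> real"
  assumes der: "\<And>t. t \<ge> 0 \<Longrightarrow> (f has_real_derivative f' t) (at t within {0..})"
  shows "continuous_on {0..} f"
  unfolding continuous_on_eq_continuous_within
  using der DERIV_continuous by (metis atLeast_iff)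

lemma mvt0:
  fixes f f' :: "real \<Rightarrow> real"
  assumes der: "\<And>t. t \<ge> 0 \<Longrightarrow> (f has_real_derivative f' t) (at t within {0..})"
    and ab: "0 \<le> a" "a < b"
  shows "\<exists>z. a < z \<and> z < b \<and> f b - f a = (b - a) * f' z"
proof -
  have cont: "continuous_on {a..b} f"
    by (rule continuous_on_subset[OF cont0[OF der]]) (use ab in auto)
  have dat: "(f has_real_derivative f' z) (at z)" if "0 < z" for z
  proof -
    have "(f has_real_derivative f' z) (at z within {0<..})"
      by (rule has_field_derivative_subset[OF der]) (use that in auto)
    then show ?thesis using at_within_open[of z "{0<..}"] that by simp
  qed
  have "\<And>x. a < x \<Longrightarrow> x < b \<Longrightarrow> f differentiable at x"
    using dat ab real_differentiable_def by (meson le_less_trans)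
  then obtain l z where z: "a < z" "z < b" "(f has_real_derivative l) (at z)" "f b - f a = (b - a) * l"
    using MVT[OF ab(2) cont] by blast
  have "l = f' z" using DERIV_unique[OF z(3) dat] z ab by simp
  then show ?thesis using z by blast
qed


lemma one_d:
  fixes u u' :: "real \<Rightarrow> real"
  assumes der: "\<And>t. t \<ge> 0 \<Longrightarrow> (u has_real_derivative u' t) (at t within {0..})"
    and t0: "0 \<le> t0" "t0 < s1" "u t0 \<ge> 0" "u s1 = -m" "m > 0"
    and lowm: "\<And>z. z \<in> {t0..s1} \<Longrightarrow> u z \<ge> -m"
    and bnd: "\<And>z. t0 < z \<Longrightarrow> z < s1 \<Longrightarrow> -m \<le> u z \<Longrightarrow> u z < 0 \<Longrightarrow> u' z \<ge> -(C*m)"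
    and C: "C * (s1 - t0) \<le> 1/2" "C \<ge> 0"
  shows False
proof -
  define Z where "Z = {t0..s1} \<inter> u -` {0..}"
  have cu: "continuous_on {t0..s1} u"
    by (rule continuous_on_subset[OF cont0[OF der]]) (use t0 in auto)
  have "closed Z" unfolding Z_def by (rule continuous_closed_preimage[OF cu]) auto
  moreover have "t0 \<in> Z" using t0 unfolding Z_def by auto
  moreover have bdd: "bdd_above Z" unfolding Z_def by (auto intro: bdd_aboveI[of _ s1])
  ultimately have s0Z: "Sup Z \<in> Z" using closed_contains_Sup by blast
  define s0 where "s0 = Sup Z"
  have s0: "t0 \<le> s0" "s0 \<le> s1" "u s0 \<ge> 0" using s0Z unfolding s0_def Z_def by auto
  then have s0s1: "s0 < s1" using t0 by (cases "s0 = s1") auto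
  have neg: "u z < 0" if "s0 < z" "z \<le> s1" for z
  proof (rule ccontr)
    assume "\<not> u z < 0"
    then have "z \<in> Z" using that s0 unfolding Z_def by auto
    then have "z \<le> s0" unfolding s0_def using bdd by (simp add: cSup_upper)
    then show False using that by simp
  qed
  obtain z where z: "s0 < z" "z < s1" "u s1 - u s0 = (s1 - s0) * u' z"
    using mvt0[OF der _ s0s1] s0 t0 by auto
  have "u' z \<ge> -(C*m)"
    using bnd[of z] neg[of z] lowm[of z] z s0 by auto
  then have "(s1 - s0) * u' z \<ge> (s1 - s0) * (-(C*m))"
    using s0s1 by (intro mult_left_mono) auto
  moreover have "(s1 - s0) * (C*m) \<le> (s1 - t0) * (C * m)"
    using s0 C t0 by (intro mult_right_mono) auto
  moreover have "(s1 - t0) * (C * m) \<le> m/2"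
  proof -
    have "(s1 - t0) * (C * m) = (C * (s1 - t0)) * m" by simp
    also have "\<dots> \<le> (1/2) * m" using C t0 by (intro mult_right_mono) auto
    finally show ?thesis by simp
  qed
  ultimately show False using z t0 s0 by linarith
qed


lemma F1_lb:
  fixes x y m B :: real
  assumes "-m \<le> x" "x < 0" "-m \<le> y" "\<bar>x\<bar> \<le> B" "\<bar>y\<bar> \<le> B" "m > 0"
    and "k \<ge> 0" "b \<ge> 0" "bt \<ge> 0" "eta1 \<ge> 0" "eta2 \<ge> 0" "c1 \<ge> 0" "c2 \<ge> 0"
  shows "F1 k b bt eta1 eta2 c1 c2 x y \<ge> -((k + b + (eta1+c1)*B + (eta2+c2)*B + bt) * m)"
proof -
  define a where "a = k - b + (eta1+c1)*x + (eta2+c2)*y"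
  define G where "G = k + b + (eta1+c1)*B + (eta2+c2)*B"
  have "(eta1+c1)*x \<le> (eta1+c1)*B" "(eta1+c1)*(-x) \<le> (eta1+c1)*B"
       "(eta2+c2)*y \<le> (eta2+c2)*B" "(eta2+c2)*(-y) \<le> (eta2+c2)*B"
    using mult_left_mono[of "-x" B "eta1+c1"] mult_left_mono[of "x" B "eta1+c1"]
      mult_left_mono[of "-y" B "eta2+c2"] mult_left_mono[of "y" B "eta2+c2"]
      assms by (simp_all add: abs_le_iff)
  then have aG: "a \<ge> -G" unfolding a_def G_def using assms by (simp add: algebra_simps)
  have "F1 k b bt eta1 eta2 c1 c2 x y = a * (-x) + bt * y" unfolding F1_def a_def by (simp add: algebra_simps)
  moreover have "a * (-x) \<ge> -G * (-x)" using aG assms by (intro mult_right_mono) auto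
  moreover have "-G * (-x) \<ge> -G * m"
  proof -
    have "G \<ge> 0" unfolding G_def using assms by (intro add_nonneg_nonneg mult_nonneg_nonneg) auto
    then show ?thesis using mult_left_mono[of "-x" m G] assms by simp
  qed
  moreover have "bt * y \<ge> bt * (-m)" using assms by (intro mult_left_mono) auto
  ultimately show ?thesis unfolding G_def by (simp add: algebra_simps)
qed

lemma F2_lb:
  fixes x y m B :: real
  assumes "-m \<le> y" "y < 0" "-m \<le> x" "\<bar>x\<bar> \<le> B" "\<bar>y\<bar> \<le> B" "m > 0"
    and "k + eta1 * x + eta2 * y > 0"
    and "k \<ge> 0" "d \<ge> 0" "eta1 \<ge> 0" "eta2 \<ge> 0" "ct1 \<ge> 0" "ct2 \<ge> 0"
  shows "F2 k d eta1 eta2 ct1 ct2 x y \<ge> -(((d + ct1*B + ct2*B) + (k + eta1*B + eta2*B)) * m)"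
proof -
  define a where "a = d + ct1*x + ct2*y"
  define H where "H = d + ct1*B + ct2*B"
  define p where "p = k + eta1 * x + eta2 * y"
  define P where "P = k + eta1*B + eta2*B"
  have "ct1*(-x) \<le> ct1*B" "ct2*(-y) \<le> ct2*B" "eta1*x \<le> eta1*B" "eta2*y \<le> eta2*B"
    using mult_left_mono[of "-x" B "ct1"] mult_left_mono[of "x" B "eta1"]
      mult_left_mono[of "-y" B "ct2"] mult_left_mono[of "y" B "eta2"]
      assms by (simp_all add: abs_le_iff)
  then have aH: "a \<ge> -H" "p \<le> P" unfolding a_def H_def p_def P_def using assms by (simp_all add: algebra_simps)
  have "F2 k d eta1 eta2 ct1 ct2 x y = a * (-y) + p * x" unfolding F2_def a_def p_def by (simp add: algebra_simps)
  moreover have "a * (-y) \<ge> -H * (-y)" using aH assms by (intro mult_right_mono) auto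
  moreover have "-H * (-y) \<ge> -H * m"
  proof -
    have "H \<ge> 0" unfolding H_def using assms by (intro add_nonneg_nonneg mult_nonneg_nonneg) auto
    then show ?thesis using mult_left_mono[of "-y" m H] assms by simp
  qed
  moreover have "p * x \<ge> p * (-m)" using assms unfolding p_def by (intro mult_left_mono) auto
  moreover have "p * (-m) \<ge> P * (-m)" using aH assms by (intro mult_right_mono_neg) auto
  ultimately show ?thesis unfolding H_def P_def by (simp add: algebra_simps)
qed

lemma lyap:
  fixes x y :: real
  assumes "x \<ge> 0" "y \<ge> 0" "alpha \<ge> 1"
    and "k \<ge> 0" "d \<ge> 0" "b \<ge> 0" "bt \<ge> 0" "eta1 \<ge> 0" "eta2 \<ge> 0" "c1 \<ge> 0" "c2 \<ge> 0" "ct1 \<ge> 0" "ct2 \<ge> 0"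
  shows "alpha * F1 k b bt eta1 eta2 c1 c2 x y + F2 k d eta1 eta2 ct1 ct2 x y
     \<le> - (alpha*(k-b) - k) * x - (d - alpha*bt) * y"
proof -
  have e: "alpha * F1 k b bt eta1 eta2 c1 c2 x y + F2 k d eta1 eta2 ct1 ct2 x y
     = - (alpha*(k-b) - k) * x - (d - alpha*bt) * y + (eta1 - alpha*(eta1+c1)) * (x*x)
       + (eta2 - alpha*(eta2+c2) - ct1) * (x*y) - ct2 * (y*y)"
    unfolding F1_def F2_def by (simp add: algebra_simps)
  have "alpha * eta1 \<ge> eta1" "alpha * eta2 \<ge> eta2" using assms
    by (metis mult_le_cancel_right1 less_le_not_le mult.commute)+
  moreover have "alpha * c1 \<ge> 0" "alpha * c2 \<ge> 0" using assms by simp_all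
  moreover have "alpha*(eta1+c1) = alpha*eta1 + alpha*c1" "alpha*(eta2+c2) = alpha*eta2 + alpha*c2"
    by (simp_all add: distrib_left)
  ultimately have "eta1 - alpha*(eta1+c1) \<le> 0" "eta2 - alpha*(eta2+c2) - ct1 \<le> 0"
    using assms by linarith+
  then have "(eta1 - alpha*(eta1+c1)) * (x*x) \<le> 0" "(eta2 - alpha*(eta2+c2) - ct1) * (x*y) \<le> 0"
    "ct2 * (y*y) \<ge> 0"
    using assms by (simp_all add: mult_nonpos_nonneg)
  then show ?thesis unfolding e by linarith
qed


lemma local_pos:
  assumes sol: "is_sol k d b bt eta1 eta2 c1 c2 ct1 ct2 x y"
    and pars: "k > 0" "d > 0" "b \<ge> 0" "bt \<ge> 0" "eta1 \<ge> 0" "eta2 \<ge> 0" "c1 \<ge> 0" "c2 \<ge> 0" "ct1 \<ge> 0" "ct2 \<ge> 0"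
    and t0: "t0 \<ge> 0" "x t0 \<ge> 0" "y t0 \<ge> 0"
  shows "\<exists>r>0. \<forall>s\<in>{t0..t0+r}. x s \<ge> 0 \<and> y s \<ge> 0"
proof -
  have dx: "\<And>t. t \<ge> 0 \<Longrightarrow> (x has_real_derivative F1 k b bt eta1 eta2 c1 c2 (x t) (y t)) (at t within {0..})"
   and dy: "\<And>t. t \<ge> 0 \<Longrightarrow> (y has_real_derivative F2 k d eta1 eta2 ct1 ct2 (x t) (y t)) (at t within {0..})"
    using sol unfolding is_sol_def by auto
  have cx: "continuous_on {0..} x" by (rule cont0[OF dx])
  have cy: "continuous_on {0..} y" by (rule cont0[OF dy])
  define p where "p s = k + eta1 * x s + eta2 * y s" for s
  have cp: "continuous_on {0..} p" unfolding p_def by (intro continuous_intros cx cy)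
  have pt0: "p t0 > 0" using t0 pars unfolding p_def by (simp add: add_pos_nonneg)
  then obtain r1 where r1: "r1 > 0" "\<forall>s\<in>{0..}. dist s t0 < r1 \<longrightarrow> dist (p s) (p t0) < p t0"
    using cp t0(1) unfolding continuous_on_iff by (metis atLeast_iff)
  have ppos: "p s > 0" if "s \<in> {t0..t0+r1/2}" for s
  proof -
    have "s \<ge> 0" "dist s t0 < r1" using that t0 r1 by (auto simp: dist_real_def)
    then have "dist (p s) (p t0) < p t0" using r1 by auto
    then show "p s > 0" by (auto simp: dist_real_def)
  qed
  have cxy1: "continuous_on {t0..t0+1} (\<lambda>s. \<bar>x s\<bar> + \<bar>y s\<bar>)"
    by (intro continuous_intros continuous_on_subset[OF cx] continuous_on_subset[OF cy]) (use t0 in auto)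
  obtain sB where sB: "sB \<in> {t0..t0+1}" "\<forall>s\<in>{t0..t0+1}. \<bar>x s\<bar> + \<bar>y s\<bar> \<le> \<bar>x sB\<bar> + \<bar>y sB\<bar>"
    using continuous_attains_sup[OF _ _ cxy1] by auto
  define B where "B = \<bar>x sB\<bar> + \<bar>y sB\<bar>"
  have bx: "\<bar>x s\<bar> \<le> B" "\<bar>y s\<bar> \<le> B" if "s \<in> {t0..t0+1}" for s
    using sB that unfolding B_def by force+
  have B0: "B \<ge> 0" unfolding B_def by simp
  define G where "G = k + b + (eta1+c1)*B + (eta2+c2)*B + bt"
  define H where "H = (d + ct1*B + ct2*B) + (k + eta1*B + eta2*B)"
  define C where "C = G + H + 1"
  have G0: "G \<ge> 0" unfolding G_def using pars B0 by simp
  have H0: "H \<ge> 0" unfolding H_def using pars B0 by simp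
  have C0: "C > 0" unfolding C_def using G0 H0 by simp
  define r where "r = min (r1/2) (min 1 (1/(2*C)))"
  have r: "r > 0" "r \<le> r1/2" "r \<le> 1" "r \<le> 1/(2*C)"
    using r1 C0 unfolding r_def by auto
  have "r * C \<le> 1/(2*C) * C" using r C0 by (intro mult_right_mono) auto
  then have rC: "r * C \<le> 1/2" using C0 by simp
  have "\<forall>s\<in>{t0..t0+r}. x s \<ge> 0 \<and> y s \<ge> 0"
  proof (rule ccontr)
    assume "\<not> (\<forall>s\<in>{t0..t0+r}. x s \<ge> 0 \<and> y s \<ge> 0)"
    then obtain s where s: "s \<in> {t0..t0+r}" "x s < 0 \<or> y s < 0" by force
    have cf: "continuous_on {t0..t0+r} (\<lambda>s. max (-x s) (-y s))"
      by (intro continuous_intros continuous_on_subset[OF cx] continuous_on_subset[OF cy]) (use t0 in auto)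
    obtain s1 where s1: "s1 \<in> {t0..t0+r}" "\<forall>z\<in>{t0..t0+r}. max (-x z) (-y z) \<le> max (-x s1) (-y s1)"
      using continuous_attains_sup[OF _ _ cf] r by auto
    define m where "m = max (-x s1) (-y s1)"
    have m0: "m > 0" using s1(2) s unfolding m_def by force
    have lowx: "x z \<ge> -m" and lowy: "y z \<ge> -m" if "z \<in> {t0..t0+r}" for z
      using s1(2) that unfolding m_def by force+
    have t0s1: "t0 < s1" using s1 m0 t0 unfolding m_def by (cases "t0 = s1") auto
    have Cs: "C * (s1 - t0) \<le> 1/2"
    proof -
      have "C * (s1 - t0) \<le> C * r" using s1 C0 by (intro mult_left_mono) auto
      then show ?thesis using rC by (simp add: mult.commute)
    qed
    have inB: "z \<in> {t0..t0+1}" if "t0 < z" "z < s1" for z using that s1 r by auto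
    have inr: "z \<in> {t0..t0+r}" if "t0 < z" "z < s1" for z using that s1 r by auto
    show False
    proof (cases "x s1 = -m")
      case True
      show False
      proof (rule one_d[OF dx t0(1) t0s1 t0(2) True m0 _ _ Cs]) 
        show "\<And>z. z \<in> {t0..s1} \<Longrightarrow> - m \<le> x z" using lowx s1 by auto
        show "0 \<le> C" using C0 by simp
        fix z assume z: "t0 < z" "z < s1" "- m \<le> x z" "x z < 0"
        have "F1 k b bt eta1 eta2 c1 c2 (x z) (y z) \<ge> -(G * m)"
          unfolding G_def using F1_lb[of m "x z" "y z" B k b bt eta1 eta2 c1 c2] z
            lowy[OF inr[OF z(1,2)]] bx[OF inB[OF z(1,2)]] m0 pars by auto
        moreover have "G * m \<le> C * m" using m0 H0 unfolding C_def by (intro mult_right_mono) auto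
        ultimately show "- (C * m) \<le> F1 k b bt eta1 eta2 c1 c2 (x z) (y z)" by linarith
      qed
    next
      case False
      then have True: "y s1 = -m" unfolding m_def by (simp add: max_def split: if_splits)
      show False
      proof (rule one_d[OF dy t0(1) t0s1 t0(3) True m0 _ _ Cs]) 
        show "\<And>z. z \<in> {t0..s1} \<Longrightarrow> - m \<le> y z" using lowy s1 by auto
        show "0 \<le> C" using C0 by simp
        fix z assume z: "t0 < z" "z < s1" "- m \<le> y z" "y z < 0"
        have pz: "p z > 0" using ppos[of z] z s1 r by auto
        have "F2 k d eta1 eta2 ct1 ct2 (x z) (y z) \<ge> -(H * m)"
          unfolding H_def using F2_lb[of m "y z" "x z" B k eta1 eta2 d ct1 ct2] z pz
            lowx[OF inr[OF z(1,2)]] bx[OF inB[OF z(1,2)]] m0 pars unfolding p_def by auto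
        moreover have "H * m \<le> C * m" using m0 G0 unfolding C_def by (intro mult_right_mono) auto
        ultimately show "- (C * m) \<le> F2 k d eta1 eta2 ct1 ct2 (x z) (y z)" by linarith
      qed
    qed
  qed
  then show ?thesis using r by blast
qed


lemma pos_inv:
  assumes sol: "is_sol k d b bt eta1 eta2 c1 c2 ct1 ct2 x y"
    and pars: "k > 0" "d > 0" "b \<ge> 0" "bt \<ge> 0" "eta1 \<ge> 0" "eta2 \<ge> 0" "c1 \<ge> 0" "c2 \<ge> 0" "ct1 \<ge> 0" "ct2 \<ge> 0"
    and init: "x 0 \<ge> 0" "y 0 \<ge> 0"
  shows "\<forall>t\<ge>0. x t \<ge> 0 \<and> y t \<ge> 0"
proof (rule ccontr)
  assume "\<not> (\<forall>t\<ge>0. x t \<ge> 0 \<and> y t \<ge> 0)"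
  then obtain t1 where t1: "t1 \<ge> 0" "x t1 < 0 \<or> y t1 < 0" by force
  have dx: "\<And>t. t \<ge> 0 \<Longrightarrow> (x has_real_derivative F1 k b bt eta1 eta2 c1 c2 (x t) (y t)) (at t within {0..})"
   and dy: "\<And>t. t \<ge> 0 \<Longrightarrow> (y has_real_derivative F2 k d eta1 eta2 ct1 ct2 (x t) (y t)) (at t within {0..})"
    using sol unfolding is_sol_def by auto
  have cx: "continuous_on {0..} x" by (rule cont0[OF dx])
  have cy: "continuous_on {0..} y" by (rule cont0[OF dy])
  define S where "S = {t. 0 \<le> t \<and> (\<forall>s\<in>{0..t}. x s \<ge> 0 \<and> y s \<ge> 0)}"
  have S0: "0 \<in> S" using init unfolding S_def by auto
  have Slt: "t < t1" if "t \<in> S" for t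
  proof (rule ccontr)
    assume "\<not> t < t1"
    then have "t1 \<in> {0..t}" using t1 by auto
    then show False using that t1 unfolding S_def by force
  qed
  have bdd: "bdd_above S" using Slt by (meson bdd_aboveI less_imp_le)
  define T where "T = Sup S"
  have T0: "T \<ge> 0" unfolding T_def using S0 bdd by (simp add: cSup_upper)
  have before: "x s \<ge> 0 \<and> y s \<ge> 0" if sT: "0 \<le> s" "s < T" for s
  proof -
    have "S \<noteq> {}" using S0 by auto
    then obtain t where "t \<in> S" "s < t" using less_cSupE[of s S] sT unfolding T_def by blast
    then show ?thesis using sT unfolding S_def by auto
  qed
  have atT: "x T \<ge> 0 \<and> y T \<ge> 0"
  proof (cases "T = 0")
    case True then show ?thesis using init by simp
  next
    case False
    then have Tp: "T > 0" using T0 by simp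
    have cl: "closure {0..<T} = {0..T}" using Tp by simp
    have cx': "continuous_on (closure {0..<T}) x" unfolding cl by (rule continuous_on_subset[OF cx]) auto
    have cy': "continuous_on (closure {0..<T}) y" unfolding cl by (rule continuous_on_subset[OF cy]) auto
    have "T \<in> closure {0..<T}" unfolding cl using Tp by simp
    then show ?thesis using continuous_ge_on_closure[OF cx'] continuous_ge_on_closure[OF cy'] before
      by (metis atLeastLessThan_iff)
  qed
  obtain r where r: "r > 0" "\<forall>s\<in>{T..T+r}. x s \<ge> 0 \<and> y s \<ge> 0"
    using local_pos[OF sol pars T0] atT by blast
  have "T + r \<in> S" unfolding S_def
  proof (safe)
    show "0 \<le> T + r" using T0 r by simp
  next
    fix s assume "s \<in> {0..T+r}"
    then show "0 \<le> x s" "0 \<le> y s" using before[of s] r atT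
      by (cases "s < T"; force)+
  qed
  then have "T + r \<le> T" unfolding T_def using bdd by (rule cSup_upper)
  then show False using r by simp
qed


lemma decay:
  assumes sol: "is_sol k d b bt eta1 eta2 c1 c2 ct1 ct2 x y"
    and pars: "k > 0" "d > 0" "b \<ge> 0" "bt \<ge> 0" "eta1 \<ge> 0" "eta2 \<ge> 0" "c1 \<ge> 0" "c2 \<ge> 0" "ct1 \<ge> 0" "ct2 \<ge> 0"
    and init: "x 0 \<ge> 0" "y 0 \<ge> 0"
    and al: "alpha \<ge> 1" "mu > 0" "mu * alpha \<le> alpha*(k-b) - k" "mu \<le> d - alpha*bt"
  shows "t \<ge> 0 \<Longrightarrow> (alpha * x t + y t) * exp (mu * t) \<le> alpha * x 0 + y 0"
proof -
  assume t: "t \<ge> 0"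
  have pos: "\<forall>t\<ge>0. x t \<ge> 0 \<and> y t \<ge> 0" by (rule pos_inv[OF sol pars init])
  have dx: "\<And>t. t \<ge> 0 \<Longrightarrow> (x has_real_derivative F1 k b bt eta1 eta2 c1 c2 (x t) (y t)) (at t within {0..})"
   and dy: "\<And>t. t \<ge> 0 \<Longrightarrow> (y has_real_derivative F2 k d eta1 eta2 ct1 ct2 (x t) (y t)) (at t within {0..})"
    using sol unfolding is_sol_def by auto
  define W' where "W' s = (alpha * F1 k b bt eta1 eta2 c1 c2 (x s) (y s) + F2 k d eta1 eta2 ct1 ct2 (x s) (y s)) * exp (mu * s)
      + (alpha * x s + y s) * (exp (mu * s) * mu)" for s
  have dW: "((\<lambda>s. (alpha * x s + y s) * exp (mu * s)) has_real_derivative W' s) (at s within {0..})" if "s \<ge> 0" for s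
    unfolding W'_def
    by (rule derivative_eq_intros refl dx dy that | simp)+
  have W'neg: "W' s \<le> 0" if "s \<ge> 0" for s
  proof -
    have xy: "x s \<ge> 0" "y s \<ge> 0" using pos that by auto
    have L: "alpha * F1 k b bt eta1 eta2 c1 c2 (x s) (y s) + F2 k d eta1 eta2 ct1 ct2 (x s) (y s)
       \<le> - (alpha*(k-b) - k) * x s - (d - alpha*bt) * y s"
      by (rule lyap) (use xy al pars in auto)
    have "(alpha*(k-b) - k) * x s \<ge> (mu*alpha) * x s" using al xy by (intro mult_right_mono) auto
    moreover have "(d - alpha*bt) * y s \<ge> mu * y s" using al xy by (intro mult_right_mono) auto
    ultimately have "alpha * F1 k b bt eta1 eta2 c1 c2 (x s) (y s) + F2 k d eta1 eta2 ct1 ct2 (x s) (y s)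
        + (alpha * x s + y s) * mu \<le> 0" using L by (simp add: algebra_simps)
    then have "(alpha * F1 k b bt eta1 eta2 c1 c2 (x s) (y s) + F2 k d eta1 eta2 ct1 ct2 (x s) (y s)
        + (alpha * x s + y s) * mu) * exp (mu * s) \<le> 0" by (simp add: mult_nonpos_nonneg)
    then show ?thesis unfolding W'_def by (simp add: algebra_simps)
  qed
  show ?thesis
  proof (cases "t = 0")
    case True then show ?thesis by simp
  next
    case False
    then obtain z where z: "0 < z" "z < t"
      "(alpha * x t + y t) * exp (mu * t) - (alpha * x 0 + y 0) * exp (mu * 0) = (t - 0) * W' z"
      using mvt0[OF dW, of 0 t] t by auto
    have "(t - 0) * W' z \<le> 0" using W'neg[of z] z by (simp add: mult_nonneg_nonpos)
    then show ?thesis using z by simp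
  qed
qed


theorem theorem6:
  fixes k d b eta1 eta2 c1 c2 ct1 ct2 :: real
  assumes "k > 0" "d > 0" "b \<ge> 0"
    and "eta1 \<ge> 0" "eta2 \<ge> 0" "c1 \<ge> 0" "c2 \<ge> 0" "ct1 \<ge> 0" "ct2 \<ge> 0"
    and "eta1 + c1 > 0" "ct2 > 0"
  shows "\<exists>\<epsilon>>0. \<forall>bt. 0 \<le> bt \<and> bt < \<epsilon> \<and> b / k + bt / d < 1 \<longrightarrow>
    ( (\<forall>x y. x \<ge> 0 \<and> y \<ge> 0 \<longrightarrow>
          (F1 k b bt eta1 eta2 c1 c2 x y = 0 \<and> F2 k d eta1 eta2 ct1 ct2 x y = 0
            \<longleftrightarrow> x = 0 \<and> y = 0))
    \<and> (\<forall>e>0. \<exists>\<delta>>0. \<forall>N1 N2. is_sol k d b bt eta1 eta2 c1 c2 ct1 ct2 N1 N2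
            \<and> N1 0 \<ge> 0 \<and> N2 0 \<ge> 0 \<and> norm (N1 0, N2 0) < \<delta>
            \<longrightarrow> (\<forall>t\<ge>0. norm (N1 t, N2 t) < e))
    \<and> (\<forall>N1 N2. is_sol k d b bt eta1 eta2 c1 c2 ct1 ct2 N1 N2 \<and> N1 0 \<ge> 0 \<and> N2 0 \<ge> 0
            \<longrightarrow> ((\<lambda>t. (N1 t, N2 t)) \<longlongrightarrow> (0, 0)) at_top) )"
proof (rule exI[of _ 1], intro conjI allI impI)
  show "(0::real) < 1" by simp
  fix bt :: real
  assume bt: "0 \<le> bt \<and> bt < 1 \<and> b / k + bt / d < 1"
  note pars = assms(1,2,3) conjunct1[OF bt] assms(4-9)
  have "(b / k + bt / d) * (k * d) < 1 * (k * d)"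
    using bt assms by (intro mult_strict_right_mono) auto
  moreover have "(b / k + bt / d) * (k * d) = b * d + bt * k" using assms by (simp add: field_simps)
  ultimately have cond: "b * d + bt * k < k * d" by simp
  have bk: "b < k"
  proof (rule ccontr)
    assume "\<not> b < k"
    then have "b * d \<ge> k * d" using assms by (intro mult_right_mono) auto
    moreover have "bt * k \<ge> 0" using bt assms by simp
    ultimately show False using cond by simp
  qed
  define D where "D = d*(k-b) + k*bt"
  define E where "E = d*(k-b) - k*bt"
  have D0: "D > 0" unfolding D_def using bk assms bt by (simp add: add_pos_nonneg)
  have E0: "E > 0" unfolding E_def using cond by (simp add: algebra_simps)
  define alpha where "alpha = 2*k*d / D"
  define A where "A = alpha*(k-b) - k"
  define Cc where "Cc = d - alpha*bt"
  have A_eq: "A = k * E / D" unfolding A_def alpha_def E_def D_def using D0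
    by (simp add: field_simps D_def)
  have Cc_eq: "Cc = d * E / D" unfolding Cc_def alpha_def E_def D_def using D0
    by (simp add: field_simps D_def)
  have A0: "A > 0" unfolding A_eq using E0 D0 assms by simp
  have Cc0: "Cc > 0" unfolding Cc_eq using E0 D0 assms by simp
  have al1: "alpha \<ge> 1"
  proof -
    have "alpha * (k - b) \<ge> 1 * (k - b)" using A0 assms unfolding A_def by simp
    then show ?thesis using bk by (simp add: mult_le_cancel_right)
  qed
  define mu where "mu = min (A/alpha) Cc"
  have mu0: "mu > 0" unfolding mu_def using A0 Cc0 al1 by simp
  have mua: "mu * alpha \<le> alpha*(k-b) - k"
  proof -
    have "mu * alpha \<le> (A/alpha) * alpha" unfolding mu_def using al1 by (intro mult_right_mono) auto
    then show ?thesis using al1 unfolding A_def by simp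
  qed
  have muc: "mu \<le> d - alpha*bt" unfolding mu_def Cc_def by simp
  show "F1 k b bt eta1 eta2 c1 c2 x y = 0 \<and> F2 k d eta1 eta2 ct1 ct2 x y = 0 \<longleftrightarrow> x = 0 \<and> y = 0"
    if xy: "x \<ge> 0 \<and> y \<ge> 0" for x y
  proof
    assume F: "F1 k b bt eta1 eta2 c1 c2 x y = 0 \<and> F2 k d eta1 eta2 ct1 ct2 x y = 0"
    have "alpha * F1 k b bt eta1 eta2 c1 c2 x y + F2 k d eta1 eta2 ct1 ct2 x y
       \<le> - (alpha*(k-b) - k) * x - (d - alpha*bt) * y"
      by (rule lyap) (use xy al1 pars in auto)
    then have le: "A * x + Cc * y \<le> 0" using F unfolding A_def Cc_def by (simp add: algebra_simps)
    have "A * x \<ge> 0" "Cc * y \<ge> 0" using A0 Cc0 xy by simp_all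
    then have "A * x = 0" "Cc * y = 0" using le by linarith+
    then show "x = 0 \<and> y = 0" using A0 Cc0 by simp
  next
    assume "x = 0 \<and> y = 0"
    then show "F1 k b bt eta1 eta2 c1 c2 x y = 0 \<and> F2 k d eta1 eta2 ct1 ct2 x y = 0"
      unfolding F1_def F2_def by simp
  qed
  have bound: "norm (N1 t, N2 t) \<le> (alpha * N1 0 + N2 0) * exp (- mu * t)"
    "alpha * N1 0 + N2 0 \<le> 2 * alpha * norm (N1 0, N2 0)"
    if sol: "is_sol k d b bt eta1 eta2 c1 c2 ct1 ct2 N1 N2" and init: "N1 0 \<ge> 0" "N2 0 \<ge> 0"
      and t: "t \<ge> 0" for N1 N2 t
  proof -
    have pos: "N1 t \<ge> 0" "N2 t \<ge> 0" using pos_inv[OF sol pars init] t by auto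
    have W: "(alpha * N1 t + N2 t) * exp (mu * t) \<le> alpha * N1 0 + N2 0"
      by (rule decay[OF sol pars init al1 mu0 mua muc t])
    have "norm (N1 t, N2 t) \<le> norm (N1 t) + norm (N2 t)" by (rule norm_Pair_le)
    also have "\<dots> = N1 t + N2 t" using pos by simp
    also have "\<dots> \<le> alpha * N1 t + N2 t" using al1 pos
      by (simp add: mult_right_mono[of 1 alpha, simplified])
    also have "\<dots> = (alpha * N1 t + N2 t) * exp (mu * t) * exp (- mu * t)"
      by (simp add: mult.assoc exp_add[symmetric])
    also have "\<dots> \<le> (alpha * N1 0 + N2 0) * exp (- mu * t)"
      using W by (intro mult_right_mono) auto
    finally show "norm (N1 t, N2 t) \<le> (alpha * N1 0 + N2 0) * exp (- mu * t)" .
    have "N1 0 \<le> norm (N1 0, N2 0)" "N2 0 \<le> norm (N1 0, N2 0)"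
      using norm_fst_le[of "N1 0" "N2 0"] norm_snd_le[of "N2 0" "N1 0"] by auto
    then have "alpha * N1 0 \<le> alpha * norm (N1 0, N2 0)" "N2 0 \<le> alpha * norm (N1 0, N2 0)"
      using al1 by (auto intro: mult_left_mono order_trans[OF _ mult_right_mono[of 1 alpha, simplified]])
    then show "alpha * N1 0 + N2 0 \<le> 2 * alpha * norm (N1 0, N2 0)" by simp
  qed
  show "\<exists>\<delta>>0. \<forall>N1 N2. is_sol k d b bt eta1 eta2 c1 c2 ct1 ct2 N1 N2
            \<and> N1 0 \<ge> 0 \<and> N2 0 \<ge> 0 \<and> norm (N1 0, N2 0) < \<delta>
            \<longrightarrow> (\<forall>t\<ge>0. norm (N1 t, N2 t) < e)" if e: "e > 0" for e
  proof (rule exI[of _ "e / (2*alpha)"], intro conjI allI impI)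
    show "e / (2*alpha) > 0" using e al1 by simp
    fix N1 N2 t
    assume H: "is_sol k d b bt eta1 eta2 c1 c2 ct1 ct2 N1 N2
            \<and> N1 0 \<ge> 0 \<and> N2 0 \<ge> 0 \<and> norm (N1 0, N2 0) < e / (2*alpha)" and t: "t \<ge> (0::real)"
    have b1: "norm (N1 t, N2 t) \<le> (alpha * N1 0 + N2 0) * exp (- mu * t)"
      and b2: "alpha * N1 0 + N2 0 \<le> 2 * alpha * norm (N1 0, N2 0)"
      using bound[of N1 N2 t] H t by auto
    have "exp (- mu * t) \<le> 1" using mu0 t by simp
    moreover have "alpha * N1 0 + N2 0 \<ge> 0" using H al1 by simp
    ultimately have "(alpha * N1 0 + N2 0) * exp (- mu * t) \<le> alpha * N1 0 + N2 0"
      by (simp add: mult_left_le)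
    moreover have "2 * alpha * norm (N1 0, N2 0) < e"
      using H al1 by (simp add: field_simps)
    ultimately show "norm (N1 t, N2 t) < e" using b1 b2 by linarith
  qed
  fix N1 N2
  assume H: "is_sol k d b bt eta1 eta2 c1 c2 ct1 ct2 N1 N2 \<and> N1 0 \<ge> 0 \<and> N2 0 \<ge> 0"
  define V0 where "V0 = alpha * N1 0 + N2 0"
  have ev: "\<forall>\<^sub>F t in at_top. norm (N1 t, N2 t) \<le> V0 * exp (- mu * t)"
    using bound H unfolding V0_def eventually_at_top_linorder by blast
  have lim: "((\<lambda>t. V0 * exp (- mu * t)) \<longlongrightarrow> 0) at_top"
    using mu0 by real_asymp
  have "((\<lambda>t. (N1 t, N2 t)) \<longlongrightarrow> 0) at_top"
    by (rule Lim_null_comparison[OF ev lim])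
  then show "((\<lambda>t. (N1 t, N2 t)) \<longlongrightarrow> (0, 0)) at_top" by (simp add: zero_prod_def)
qed

end
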